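(* Let $B>0$, $C\in\mathbb{R}$ and $\mu\in\mathbb{R}$. On $\ell^2(\mathbb{N}_0)$ with standard orthonormal basis $(e_k)_{k\ge 0}$, let $H$ be the bounded self-adjoint Jacobi operator $$H e_0=\mu e_0+C e_1,\qquad H e_1=C e_0+B e_2,\qquad H e_k=B e_{k-1}+B e_{k+1}\ (k\ge 2),$$ i.e. the tridiagonal matrix with diagonal $(\mu,0,0,\dots)$ and off-diagonal $(C,B,B,\dots)$. Put $\mu_B=\mu/B$ and $C_B=C/B$, and assume the decay condition: if $C\neq B$, $$2\,|1-C_B^2|<\Big|\,|\mu_B|-\sqrt{\mu_B^2+4C_B^2-4}\,\Big|,$$ and if $C=B$, $|\mu_B|<1$. Fix a finite index $j\ge 0$ and let $\psi(t)=e^{-iHt}e_j$. Then $$\lim_{t\to+\infty}\langle n_j(t)\rangle=\lim_{t\to+\infty}|\langle e_j,\psi(t)\rangle|^2=0 .$$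
   Context: $n_j=e_je_j^\dagger$ denotes the projection onto $e_j$, and $\langle n_j(t)\rangle=\langle \psi(t),n_j\psi(t)\rangle$ is its expectation value in the time-evolved state $\psi(t)=e^{-iHt}e_j$ (units with $\hbar=1$). In the decay condition, when $\mu_B^2+4C_B^2-4<0$ the square root is the principal complex square root and the outer $|\cdot|$ is the complex modulus. *)

theory Defs
  imports "HOL-Analysis.Analysis"
begin

text \<open>Vectors of l2(N_0) are represented as sequences nat => complex.
  The Jacobi operator H acts on a sequence by its tridiagonal matrix
  (diagonal (mu,0,0,...), off-diagonal (C,B,B,...)).\<close>

definition jacobiH :: "real \<Rightarrow> real \<Rightarrow> real \<Rightarrow> (nat \<Rightarrow> complex) \<Rightarrow> (nat \<Rightarrow> complex)" where
  "jacobiH B C \<mu> v = (\<lambda>k.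
     if k = 0 then of_real \<mu> * v 0 + of_real C * v 1
     else if k = 1 then of_real C * v 0 + of_real B * v 2
     else of_real B * v (k - 1) + of_real B * v (k + 1))"

definition basis_vec :: "nat \<Rightarrow> nat \<Rightarrow> complex" where
  "basis_vec j = (\<lambda>k. if k = j then 1 else 0)"

text \<open>psi(t) = exp(-iHt) e_j, with the exponential of the bounded operator H
  given by its (norm-convergent) power series: sum_n (-i t)^n / n! H^n e_j.\<close>
definition evolved :: "real \<Rightarrow> real \<Rightarrow> real \<Rightarrow> nat \<Rightarrow> real \<Rightarrow> nat \<Rightarrow> complex" where
  "evolved B C \<mu> j t = (\<lambda>k. \<Sum>n. ((- \<i> * of_real t) ^ n / of_nat (fact n))
                                 * ((jacobiH B C \<mu> ^^ n) (basis_vec j)) k)"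

definition l2_inner :: "(nat \<Rightarrow> complex) \<Rightarrow> (nat \<Rightarrow> complex) \<Rightarrow> complex" where
  "l2_inner u v = (\<Sum>k. cnj (u k) * v k)"

definition proj_nj :: "nat \<Rightarrow> (nat \<Rightarrow> complex) \<Rightarrow> (nat \<Rightarrow> complex)" where
  "proj_nj j v = (\<lambda>k. l2_inner (basis_vec j) v * basis_vec j k)"

end

theory Submission
  imports Defs "HOL-Complex_Analysis.Complex_Analysis"
begin

lemma root_mod_lt1:
  fixes m a :: real and u q :: complex
  assumes q2: "q^2 = of_real (m^2 + 4*a)" and req: "Re q \<ge> 0"
    and hyp: "2 * \<bar>a\<bar> < cmod (of_real \<bar>m\<bar> - q)"
    and root: "u^2 - of_real m * u - of_real a = 0"
  shows "cmod u < 1"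
proof -
  define r1 where "r1 = (of_real m + q)/2"
  define r2 where "r2 = (of_real m - q)/2"
  have prod: "r1 * r2 = - of_real a"
    unfolding r1_def r2_def using q2 by (simp add: field_simps power2_eq_square)
  hence prodn: "cmod r1 * cmod r2 = \<bar>a\<bar>" by (metis norm_minus_cancel norm_mult norm_of_real)
  have "(2*u - of_real m - q) * (2*u - of_real m + q) = 4 * (u^2 - of_real m * u - of_real a)"
    using q2 by (simp add: algebra_simps power2_eq_square)
  hence "(2*u - of_real m - q) * (2*u - of_real m + q) = 0" using root by simp
  hence "2*u - of_real m - q = 0 \<or> 2*u - of_real m + q = 0" by simp
  hence u12: "u = r1 \<or> u = r2"
  proof
    assume "2*u - of_real m - q = 0"
    hence "2*u = of_real m + q" by (simp add: algebra_simps)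
    thus ?thesis unfolding r1_def by (simp add: field_simps)
  next
    assume "2*u - of_real m + q = 0"
    hence "2*u = of_real m - q" by (simp add: algebra_simps)
    thus ?thesis unfolding r2_def by (simp add: field_simps)
  qed
  have n1: "cmod (of_real m + q)^2 = (m + Re q)^2 + (Im q)^2" by (simp add: cmod_power2)
  have n2: "cmod (of_real m - q)^2 = (m - Re q)^2 + (Im q)^2" by (simp add: cmod_power2)
  have "cmod r1 < 1 \<and> cmod r2 < 1"
  proof (cases "m \<ge> 0")
    case True
    have h: "\<bar>a\<bar> < cmod r2" using hyp True by (simp add: r2_def norm_divide)
    have mq: "m * Re q \<ge> 0" using True req by simp
    have "(m - Re q)^2 + (Im q)^2 \<le> (m + Re q)^2 + (Im q)^2" using mq
      by (simp add: power2_eq_square algebra_simps)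
    hence "cmod (of_real m - q)^2 \<le> cmod (of_real m + q)^2" unfolding n1 n2 .
    hence "cmod (of_real m - q) \<le> cmod (of_real m + q)" by (simp add: power_mono_iff)
    hence le: "cmod r2 \<le> cmod r1" by (simp add: r1_def r2_def norm_divide)
    have pos: "cmod r2 > 0" using h by linarith
    have "cmod r1 * cmod r2 < 1 * cmod r2" using prodn h by simp
    hence "cmod r1 < 1" using pos by (simp add: mult_less_cancel_right)
    thus ?thesis using le by simp
  next
    case False
    have "cmod (of_real \<bar>m\<bar> - q) = cmod (of_real m + q)"
      using False by (metis abs_of_neg minus_diff_eq norm_minus_cancel not_le of_real_minus diff_minus_eq_add add.commute)
    hence h: "\<bar>a\<bar> < cmod r1" using hyp by (simp add: r1_def norm_divide)
    have mq: "m * Re q \<le> 0" using False req by (simp add: mult_nonpos_nonneg)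
    have "(m + Re q)^2 + (Im q)^2 \<le> (m - Re q)^2 + (Im q)^2" using mq
      by (simp add: power2_eq_square algebra_simps)
    hence "cmod (of_real m + q)^2 \<le> cmod (of_real m - q)^2" unfolding n1 n2 .
    hence "cmod (of_real m + q) \<le> cmod (of_real m - q)" by (simp add: power_mono_iff)
    hence le: "cmod r1 \<le> cmod r2" by (simp add: r1_def r2_def norm_divide)
    have pos: "cmod r1 > 0" using h by linarith
    have "cmod r2 * cmod r1 < 1 * cmod r1" using prodn h by (simp add: mult.commute)
    hence "cmod r2 < 1" using pos by (simp add: mult_less_cancel_right)
    thus ?thesis using le by simp
  qed
  thus ?thesis using u12 by auto
qed

locale jac =
  fixes B C \<mu> :: real
  assumes Bpos: "B > 0"
    and roots: "\<And>u. u^2 - of_real (\<mu>/B) * u - of_real ((C/B)^2 - 1) = 0 \<Longrightarrow> cmod u < 1"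
begin

definition m where "m = \<mu>/B"
definition cb where "cb = C/B"
definition a where "a = cb^2 - 1"
definition F :: "complex \<Rightarrow> complex" where "F z = z^2 - of_real m * z - of_real a"
definition G :: "complex \<Rightarrow> complex" where "G z = 1 - of_real m * z - of_real a * z^2"
definition hf :: "complex \<Rightarrow> complex" where "hf z = - F z / G z"
definition cc :: "complex \<Rightarrow> complex" where "cc z = F z / (of_real cb * (z^2 - 1))"

lemma F_root: "F u = 0 \<Longrightarrow> cmod u < 1"
  using roots unfolding F_def m_def a_def cb_def by blast

lemma a_lt1: "\<bar>a\<bar> < 1"
proof -
  define q where "q = csqrt (of_real (m^2 + 4*a))"
  define r1 where "r1 = (of_real m + q)/2"
  define r2 where "r2 = (of_real m - q)/2"
  have q2: "q^2 = of_real (m^2+4*a)" by (simp add: q_def)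
  have "4 * F r1 = q^2 - of_real (m^2+4*a)" unfolding F_def r1_def
    by (simp add: field_simps power2_eq_square)
  hence f1: "F r1 = 0" using q2 by simp
  have "4 * F r2 = q^2 - of_real (m^2+4*a)" unfolding F_def r2_def
    by (simp add: field_simps power2_eq_square)
  hence f2: "F r2 = 0" using q2 by simp
  have prod: "r1 * r2 = - of_real a"
    unfolding r1_def r2_def using q2 by (simp add: field_simps power2_eq_square)
  hence "cmod r1 * cmod r2 = \<bar>a\<bar>" by (metis norm_minus_cancel norm_mult norm_of_real)
  moreover have "cmod r1 < 1" "cmod r2 < 1" using F_root f1 f2 by auto
  ultimately show ?thesis
    using mult_strict_mono'[of "cmod r1" 1 "cmod r2" 1] by simp
qed

lemma cb_nz: "cb \<noteq> 0"
  using a_lt1 unfolding a_def by auto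

lemma C_nz: "C \<noteq> 0" using cb_nz unfolding cb_def by auto
lemma B_nz: "B \<noteq> 0" using Bpos by auto

lemma G_nz: "cmod z \<le> 1 \<Longrightarrow> G z \<noteq> 0"
proof
  assume z: "cmod z \<le> 1" and g: "G z = 0"
  show False
  proof (cases "z = 0")
    case True thus False using g by (simp add: G_def)
  next
    case False
    have "G z = z^2 * F (inverse z)" using False
      by (simp add: G_def F_def field_simps power2_eq_square)
    hence "F (inverse z) = 0" using g False by simp
    hence "cmod (inverse z) < 1" by (rule F_root)
    hence "inverse (cmod z) < 1" by (simp add: norm_inverse)
    hence "1 < cmod z" using False by (simp add: inverse_less_1_iff)
    thus False using z by simp
  qed
qed

lemma F_cis_nz: "F (cis t) \<noteq> 0"
  using F_root[of "cis t"] by auto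

lemma F_cnj: "F (cnj z) = cnj (F z)" by (simp add: F_def)
lemma G_cnj: "G (cnj z) = cnj (G z)" by (simp add: G_def)
lemma hf_cnj: "hf (cnj z) = cnj (hf z)" by (simp add: hf_def F_cnj G_cnj)

lemma inv_sq: "z^2 \<noteq> 1 \<Longrightarrow> inverse z ^ 2 \<noteq> (1::complex)"
  by (metis power_inverse inverse_1 inverse_inverse_eq)

lemma F_inv: "z \<noteq> 0 \<Longrightarrow> F (1 / z) = G z / z^2"
  unfolding F_def G_def by (simp add: field_simps power2_eq_square)

lemma FG: "F z - G z = of_real cb ^ 2 * (z^2 - 1)"
  by (simp add: F_def G_def a_def algebra_simps power2_eq_square)

lemma cc_inv: assumes "z \<noteq> 0" "z^2 \<noteq> 1"
  shows "cc (inverse z) = - G z / (of_real cb * (z^2 - 1))"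
proof -
  have d: "z^2 - 1 \<noteq> 0" using assms by auto
  have e: "(1/z) ^ 2 - 1 = - (z^2 - 1) / z^2" using assms(1) by (simp add: field_simps power2_eq_square)
  show ?thesis using assms d cb_nz unfolding inverse_eq_divide cc_def F_inv[OF assms(1)] e
    by (simp add: field_simps)
qed

lemma cc_sum: assumes "z \<noteq> 0" "z^2 \<noteq> 1"
  shows "cc z + cc (inverse z) = of_real cb"
proof -
  have d: "z^2 - 1 \<noteq> 0" using assms by auto
  have "cc z + cc (inverse z) = (F z - G z) / (of_real cb * (z^2 - 1))"
    unfolding cc_inv[OF assms] by (simp add: cc_def diff_divide_distrib)
  also have "\<dots> = of_real cb" unfolding FG using d cb_nz by (simp add: power2_eq_square)
  finally show ?thesis .
qed

lemma gen: "D \<noteq> 0 \<Longrightarrow> z \<noteq> 0 \<Longrightarrow> X / D * z + (- Y / D) * inverse z = (z^2 * X - Y) / (D * (z::complex))"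
  by (simp add: field_simps power2_eq_square)

lemma cc_one: assumes "z \<noteq> 0" "z^2 \<noteq> 1"
  shows "cc z * z + cc (inverse z) * inverse z = (z + inverse z - of_real m) / of_real cb"
proof -
  have d: "z^2 - 1 \<noteq> 0" using assms by auto
  have fac: "z^2 * F z - G z = (z^2 - 1) * (z^2 + 1 - of_real m * z)"
    unfolding F_def G_def power2_eq_square by (simp add: algebra_simps)
  have "cc z * z + cc (inverse z) * inverse z = (z^2 * F z - G z) / (of_real cb * (z^2 - 1) * z)"
    unfolding cc_inv[OF assms] unfolding cc_def using assms(1) d cb_nz
      gen[of "of_real cb * (z^2 - 1)" z "F z" "G z"] by simp
  also have "\<dots> = (z^2 + 1 - of_real m * z) / (of_real cb * z)"
    unfolding fac using d by simp
  also have "\<dots> = (z + inverse z - of_real m) / of_real cb"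
    using assms(1) cb_nz by (simp add: field_simps power2_eq_square)
  finally show ?thesis .
qed

lemma cc_ratio: assumes "z \<noteq> 0" "z^2 \<noteq> 1" "G z \<noteq> 0"
  shows "cc z / cc (inverse z) = hf z"
proof -
  have d: "z^2 - 1 \<noteq> 0" using assms by auto
  have "cc z / cc (inverse z) = (F z / (of_real cb * (z^2 - 1))) / (- G z / (of_real cb * (z^2 - 1)))"
    unfolding cc_inv[OF assms(1,2)] unfolding cc_def ..
  also have "\<dots> = hf z" unfolding hf_def using d cb_nz assms(3) by (simp add: field_simps)
  finally show ?thesis .
qed

lemma rec_gen: assumes "z * y = (1::complex)"
  shows "(z + y) * (c * z^Suc k + c' * y ^ Suc k) - (c*z^k + c'*y^k)
       = c*z^Suc(Suc k) + c'*y^Suc(Suc k)"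
proof -
  have e1: "z^Suc k * y = z^k" using assms by (simp add: power_Suc mult.assoc mult.left_commute[of z])
  have e2: "z * y^Suc k = y^k" using assms by (simp add: power_Suc mult.assoc[symmetric])
  have "(z + y) * (c * z^Suc k + c' * y ^ Suc k) =
     c * (z * z^Suc k) + c * (z^Suc k * y) + c' * (z * y^Suc k) + c' * (y * y^Suc k)"
    by (simp add: algebra_simps)
  also have "\<dots> = c*z^Suc(Suc k) + c * z^k + c' * y^k + c'*y^Suc(Suc k)"
    unfolding e1 e2 by simp
  finally show ?thesis by simp
qed

end

lemma gen2: assumes "\<alpha> \<noteq> 0" "\<beta> \<noteq> 0"
  shows "(\<alpha> * A + \<beta> * Bb) * (\<alpha> * Cc + \<beta> * D) * (1 / (4 * of_real pi * \<alpha> * \<beta>)) =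
     ((\<alpha> / \<beta>) * (A * Cc) + (\<beta> / \<alpha>) * (Bb * D) + A * D + Cc * Bb) / (4 * of_real pi :: complex)"
proof -
  define p :: complex where "p = 4 * of_real pi"
  have p: "p \<noteq> 0" unfolding p_def by simp
  have e: "(\<alpha> * A + \<beta> * Bb) * (\<alpha> * Cc + \<beta> * D) = \<alpha>*\<alpha>*(A*Cc) + \<alpha>*\<beta>*(A*D + Cc*Bb) + \<beta>*\<beta>*(Bb*D)"
    by (simp add: algebra_simps)
  have 1: "\<alpha>*\<alpha>*(A*Cc) / (p*\<alpha>*\<beta>) = (\<alpha>/\<beta>)*(A*Cc)/p" using assms p by (simp add: field_simps)
  have 2: "\<alpha>*\<beta>*(A*D + Cc*Bb) / (p*\<alpha>*\<beta>) = (A*D + Cc*Bb)/p" using assms p by (simp add: field_simps)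
  have 3: "\<beta>*\<beta>*(Bb*D) / (p*\<alpha>*\<beta>) = (\<beta>/\<alpha>)*(Bb*D)/p" using assms p by (simp add: field_simps)
  have "(\<alpha> * A + \<beta> * Bb) * (\<alpha> * Cc + \<beta> * D) * (1 / (p * \<alpha> * \<beta>)) =
    \<alpha>*\<alpha>*(A*Cc) / (p*\<alpha>*\<beta>) + \<alpha>*\<beta>*(A*D + Cc*Bb) / (p*\<alpha>*\<beta>) + \<beta>*\<beta>*(Bb*D) / (p*\<alpha>*\<beta>)"
    unfolding e by (simp add: add_divide_distrib)
  also have "\<dots> = ((\<alpha> / \<beta>) * (A * Cc) + (\<beta> / \<alpha>) * (Bb * D) + A * D + Cc * Bb) / p"
    unfolding 1 2 3 by (simp add: add_divide_distrib)
  finally show ?thesis unfolding p_def by (simp add: mult.assoc)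
qed


context jac begin

fun P :: "nat \<Rightarrow> real \<Rightarrow> real" where
  "P 0 x = 1"
| "P (Suc 0) x = (x - \<mu>) / C"
| "P (Suc (Suc 0)) x = (x * P (Suc 0) x - C) / B"
| "P (Suc (Suc (Suc k))) x = (x * P (Suc (Suc k)) x - B * P (Suc k) x) / B"

lemma row0: "\<mu> * P 0 x + C * P 1 x = x * P 0 x" using C_nz by simp
lemma row1: "C * P 0 x + B * P 2 x = x * P 1 x" using B_nz by (simp add: numeral_2_eq_2)
lemma rowk: assumes "k \<ge> 2" shows "B * P (k-1) x + B * P (k+1) x = x * P k x"
proof -
  obtain k' where k: "k = Suc (Suc k')" using assms by (metis add_2_eq_Suc le_Suc_ex)
  show ?thesis unfolding k using B_nz by simp
qed

definition phi :: "nat \<Rightarrow> real \<Rightarrow> real" where "phi k t = P k (2 * B * cos t)"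
definition psi :: "nat \<Rightarrow> real \<Rightarrow> complex" where
  "psi k t = cc (cis t) * cis t ^ k + cc (inverse (cis t)) * inverse (cis t) ^ k"
definition w :: "real \<Rightarrow> real" where
  "w t = cb^2 * (sin t)^2 / (pi * (cmod (F (cis t)))^2)"

lemma cis_sq: assumes "sin t \<noteq> 0" shows "cis t ^ 2 \<noteq> 1"
proof
  assume "cis t ^ 2 = 1"
  hence "cis t = 1 \<or> cis t = -1" by (simp add: power2_eq_1_iff)
  hence "Im (cis t) = Im 1 \<or> Im (cis t) = Im (-1)" by metis
  thus False using assms by simp
qed

lemma cis_nz: "cis t \<noteq> 0" by (metis cis_neq_zero)

lemma cos_cis: "cis t + inverse (cis t) = of_real (2 * cos t)"
  by (simp add: complex_eq_iff)

lemma cos_cis2: "cis t + cis (- t) = 2 * complex_of_real (cos t)"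
  by (simp add: complex_eq_iff)

lemma psi0: "sin t \<noteq> 0 \<Longrightarrow> psi 0 t = of_real cb"
  unfolding psi_def using cc_sum[OF cis_nz cis_sq] by simp

lemma psi1: "sin t \<noteq> 0 \<Longrightarrow> psi 1 t = of_real ((2 * cos t - m) / cb)"
  unfolding psi_def using cc_one[OF cis_nz cis_sq, of t] by (simp add: cos_cis2)

lemma psi_rec: "psi (Suc (Suc k)) t = of_real (2 * cos t) * psi (Suc k) t - psi k t"
  unfolding psi_def cos_cis[symmetric]
  by (rule rec_gen[symmetric]) (simp add: cis_mult)

lemma phi_closed_aux: assumes "sin t \<noteq> 0"
  shows "of_real (phi (Suc k) t) = psi (Suc k) t \<and> of_real (phi (Suc (Suc k)) t) = psi (Suc (Suc k)) t"
proof (induction k)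
  case 0
  have "phi (Suc 0) t = (2 * cos t - m) / cb"
    using B_nz C_nz unfolding phi_def m_def cb_def by (simp add: field_simps)
  hence p1: "of_real (phi (Suc 0) t) = psi (Suc 0) t"
    using psi1[OF assms] by simp
  have "phi (Suc (Suc 0)) t = 2 * cos t * phi (Suc 0) t - cb"
    unfolding phi_def cb_def using B_nz by (simp add: field_simps)
  hence "of_real (phi (Suc (Suc 0)) t) = of_real (2 * cos t) * psi (Suc 0) t - psi 0 t"
    using p1 psi0[OF assms] by simp
  thus ?case using p1 psi_rec by simp
next
  case (Suc k)
  have "phi (Suc (Suc (Suc k))) t = 2 * cos t * phi (Suc (Suc k)) t - phi (Suc k) t"
    unfolding phi_def using B_nz by (simp add: field_simps)
  hence "of_real (phi (Suc (Suc (Suc k))) t) = of_real (2 * cos t) * psi (Suc (Suc k)) t - psi (Suc k) t"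
    using Suc.IH by simp
  thus ?case using Suc.IH psi_rec by simp
qed

definition sc :: "nat \<Rightarrow> real" where "sc k = (if k = 0 then 1 / cb else 1)"

lemma phi_psi: "sin t \<noteq> 0 \<Longrightarrow> of_real (phi k t) = of_real (sc k) * psi k t"
proof (cases k)
  case 0
  assume "sin t \<noteq> 0"
  thus ?thesis using 0 psi0 cb_nz by (simp add: sc_def phi_def)
next
  case (Suc k')
  assume "sin t \<noteq> 0"
  thus ?thesis using Suc phi_closed_aux by (simp add: sc_def)
qed

lemma inv_cis_cnj: "inverse (cis t) = cnj (cis t)" by (simp add: cis_cnj)

lemma gen3: "c \<noteq> 0 \<Longrightarrow> d1 \<noteq> 0 \<Longrightarrow> d2 \<noteq> 0 \<Longrightarrow> X \<noteq> 0 \<Longrightarrow> Y \<noteq> 0 \<Longrightarrow> p \<noteq> 0 \<Longrightarrow>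
   1 / (4 * p * (X / (c * d1)) * (Y / (c * d2))) = c^2 * (d1 * d2 / 4) / (p * (X * Y :: complex))"
  by (simp add: field_simps power2_eq_square)

lemma w_eq: assumes "sin t \<noteq> 0"
  shows "of_real (w t) = 1 / (4 * of_real pi * cc (cis t) * cc (inverse (cis t)))"
proof -
  define z where "z = cis t"
  define y where "y = inverse (cis t)"
  have zy: "z * y = 1" unfolding z_def y_def by (rule right_inverse[OF cis_nz])
  have z0: "z \<noteq> 0" "z^2 \<noteq> 1" unfolding z_def by (rule cis_nz, rule cis_sq[OF assms])
  have y0: "y \<noteq> 0" "y^2 \<noteq> 1" unfolding y_def by (simp add: cis_nz, rule inv_sq[OF cis_sq[OF assms]])
  have Fy: "F y = cnj (F z)" unfolding z_def y_def inv_cis_cnj F_cnj ..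
  have nF: "of_real ((cmod (F z))^2) = F z * F y" unfolding Fy complex_norm_square ..
  have s: "z - y = 2 * \<i> * of_real (sin t)" unfolding z_def y_def inv_cis_cnj complex_diff_cnj
    by simp
  have s1: "(z - y)^2 = - (4 * (complex_of_real (sin t))^2)" unfolding s by (simp add: power_mult_distrib)
  have s2: "(complex_of_real (sin t))^2 = - ((z - y)^2) / 4" unfolding s1 by simp
  have e: "(z^2 - 1) * (y^2 - 1) = (z*y)^2 - z^2 - y^2 + 1" by (simp add: algebra_simps power2_eq_square)
  have e2: "- ((z - y)^2) = 2 * (z*y) - z^2 - y^2" by (simp add: algebra_simps power2_eq_square)
  have key: "(of_real (sin t))^2 = (z^2 - 1) * (y^2 - 1) / 4"
    unfolding s2 e e2 zy by simp
  have Fz: "F z \<noteq> 0" unfolding z_def by (rule F_cis_nz)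
  have Fyn: "F y \<noteq> 0" using Fz Fy by simp
  have "of_real (w t) = of_real cb ^ 2 * (of_real (sin t))^2 / (of_real pi * (F z * F y))"
    unfolding w_def nF[symmetric] unfolding z_def by simp
  also have "\<dots> = of_real cb ^ 2 * ((z^2 - 1) * (y^2 - 1) / 4) / (of_real pi * (F z * F y))"
    unfolding key ..
  also have "\<dots> = 1 / (4 * of_real pi * cc z * cc y)"
    unfolding cc_def using cb_nz z0 y0 Fz Fyn by (subst gen3) auto
  finally show ?thesis unfolding z_def y_def .
qed

lemma prod_formula: assumes "sin t \<noteq> 0"
  shows "psi k t * psi l t * of_real (w t) =
    (hf (cis t) * cis t ^ (k+l) + hf (inverse (cis t)) * inverse (cis t) ^ (k+l)
      + cis t ^ k * inverse (cis t) ^ l + cis t ^ l * inverse (cis t) ^ k) / (4 * of_real pi)"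
proof -
  define z where "z = cis t"
  define y where "y = inverse (cis t)"
  have z0: "z \<noteq> 0" "z^2 \<noteq> 1" unfolding z_def by (rule cis_nz, rule cis_sq[OF assms])
  have y0: "y \<noteq> 0" "y^2 \<noteq> 1" unfolding y_def by (simp add: cis_nz, rule inv_sq[OF cis_sq[OF assms]])
  have Gz: "G z \<noteq> 0" unfolding z_def by (rule G_nz) simp
  have Gy: "G y \<noteq> 0" unfolding y_def by (rule G_nz) (simp add: norm_inverse)
  have Fz: "F z \<noteq> 0" unfolding z_def by (rule F_cis_nz)
  have Fy: "F y \<noteq> 0" unfolding y_def inv_cis_cnj F_cnj using F_cis_nz by simp
  have ca: "cc z \<noteq> 0" unfolding cc_def using Fz z0 cb_nz by simp
  have cbn: "cc y \<noteq> 0" unfolding cc_def using Fy y0 cb_nz by simp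
  have r1: "cc z / cc y = hf z" unfolding y_def z_def by (rule cc_ratio) (use z0 Gz in \<open>auto simp: z_def\<close>)
  have r2: "cc y / cc z = hf y"
    using cc_ratio[OF y0 Gy] unfolding y_def z_def by simp
  have "psi k t * psi l t * of_real (w t) =
     (cc z * z^k + cc y * y^k) * (cc z * z^l + cc y * y^l) * (1 / (4 * of_real pi * cc z * cc y))"
    unfolding psi_def w_eq[OF assms] z_def y_def ..
  also have "\<dots> = ((cc z / cc y) * (z^k * z^l) + (cc y / cc z) * (y^k * y^l) + z^k * y^l + z^l * y^k) / (4 * of_real pi)"
    by (rule gen2[OF ca cbn])
  also have "\<dots> = (hf z * z^(k+l) + hf y * y^(k+l) + z^k * y^l + z^l * y^k) / (4 * of_real pi)"
    unfolding r1 r2 by (simp add: power_add)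
  finally show ?thesis unfolding z_def y_def .
qed

end

lemma fourier_disc:
  fixes f :: "complex \<Rightarrow> complex" and n :: nat
  assumes contf: "continuous_on (cball 0 1) f" and holf: "f holomorphic_on ball 0 1"
  shows "((\<lambda>t. f (cis t) * cis t ^ n) has_integral (2 * pi * f 0 * 0 ^ n)) {0..2*pi}"
proof -
  define g where "g u = f u * u ^ n" for u
  have "continuous_on (cball 0 1) g" unfolding g_def by (intro continuous_intros contf)
  moreover have "g holomorphic_on ball 0 1" unfolding g_def by (intro holomorphic_intros holf)
  ultimately have "((\<lambda>u. g u / (u - 0)) has_contour_integral (2 * of_real pi * \<i> * g 0)) (circlepath 0 1)"
    by (intro Cauchy_integral_circlepath) auto
  hence "((\<lambda>t. g (0 + 1 * cis t) / (0 + 1 * cis t - 0) * 1 * \<i> * cis t) has_integral (2 * of_real pi * \<i> * g 0)) {0..2*pi}"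
    unfolding circlepath_def by (subst (asm) has_contour_integral_part_circlepath_iff) auto
  hence "((\<lambda>t. \<i> * g (cis t)) has_integral (\<i> * (2 * of_real pi * g 0))) {0..2*pi}"
    by (simp add: field_simps)
  hence "((\<lambda>t. g (cis t)) has_integral (2 * of_real pi * g 0)) {0..2*pi}"
    by (fastforce dest: has_integral_mult_right[where c="-\<i>"])
  thus ?thesis by (simp add: g_def mult.assoc)
qed

lemma int_pow:
  "((\<lambda>t. cis t ^ k * inverse (cis t) ^ l) has_integral (if k = l then 2*pi else 0)) {0..2*pi}"
proof (cases "l \<le> k")
  case True
  have e: "cis t ^ k * inverse (cis t) ^ l = cis t ^ (k - l)" for t
  proof -
    have "cis t ^ k = cis t ^ (k - l) * cis t ^ l" using True by (simp add: power_add[symmetric])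
    moreover have "cis t ^ l * inverse (cis t) ^ l = 1"
      by (simp add: power_mult_distrib[symmetric] cis_mult)
    ultimately show ?thesis by (simp add: mult.assoc)
  qed
  have "((\<lambda>t. (\<lambda>_. 1) (cis t) * cis t ^ (k - l)) has_integral (2 * complex_of_real pi * 1 * 0 ^ (k - l))) {0..2*pi}"
    using fourier_disc[of "\<lambda>_. 1", OF continuous_on_const holomorphic_on_const] by simp
  moreover have "k \<noteq> l \<Longrightarrow> (0::complex) ^ (k - l) = 0" using True by simp
  ultimately show ?thesis using True unfolding e by (cases "k = l") auto
next
  case False
  have e: "cis t ^ k * inverse (cis t) ^ l = cnj (cis t ^ (l - k))" for t
  proof -
    have "inverse (cis t) ^ l = inverse (cis t) ^ (l - k) * inverse (cis t) ^ k" using False by (simp add: power_add[symmetric])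
    moreover have "cis t ^ k * inverse (cis t) ^ k = 1"
      by (simp add: power_mult_distrib[symmetric] cis_mult)
    ultimately have "cis t ^ k * inverse (cis t) ^ l = inverse (cis t) ^ (l - k)"
      by (metis mult.assoc mult.commute mult_1)
    thus ?thesis by (simp add: cis_cnj)
  qed
  have "((\<lambda>t. (\<lambda>_. 1) (cis t) * cis t ^ (l - k)) has_integral (2 * complex_of_real pi * 1 * 0 ^ (l - k))) {0..2*pi}"
    using fourier_disc[of "\<lambda>_. 1", OF continuous_on_const holomorphic_on_const] by simp
  moreover have "(0::complex) ^ (l - k) = 0" using False by simp
  ultimately have "((\<lambda>t. cis t ^ (l - k)) has_integral 0) {0..2*pi}" by simp
  hence "((cnj \<circ> (\<lambda>t. cis t ^ (l - k))) has_integral cnj 0) {0..2*pi}" by (subst has_integral_cnj)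
  thus ?thesis using False unfolding e by (simp add: o_def)
qed

context jac begin

lemma G_nz_cball: "\<forall>z\<in>cball 0 1. G z \<noteq> 0" using G_nz by auto

lemma hf_cont: "continuous_on (cball 0 1) hf"
proof -
  have cF: "continuous_on (cball 0 1) (\<lambda>z. - F z)" unfolding F_def by (intro continuous_intros)
  have cG: "continuous_on (cball 0 1) G" unfolding G_def[abs_def] by (intro continuous_intros)
  have "continuous_on (cball 0 1) (\<lambda>z. - F z / G z)"
    by (rule continuous_on_divide[OF cF cG]) (use G_nz_cball in auto)
  thus ?thesis unfolding hf_def[abs_def] .
qed

lemma hf_hol: "hf holomorphic_on ball 0 1"
proof -
  have cF: "(\<lambda>z. - F z) holomorphic_on ball 0 1" unfolding F_def by (intro holomorphic_intros)
  have cG: "G holomorphic_on ball 0 1" unfolding G_def[abs_def] by (intro holomorphic_intros)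
  have "(\<lambda>z. - F z / G z) holomorphic_on ball 0 1"
    by (rule holomorphic_on_divide[OF cF cG]) (use G_nz_cball in auto)
  thus ?thesis unfolding hf_def[abs_def] .
qed

lemma hf0: "hf 0 = of_real a" by (simp add: hf_def F_def G_def)

lemma int1: "((\<lambda>t. hf (cis t) * cis t ^ n) has_integral complex_of_real (2 * pi * a * 0 ^ n)) {0..2*pi}"
  using fourier_disc[OF hf_cont hf_hol, of n] by (simp add: hf0)

lemma int2: "((\<lambda>t. hf (inverse (cis t)) * inverse (cis t) ^ n) has_integral complex_of_real (2 * pi * a * 0 ^ n)) {0..2*pi}"
proof -
  have "((cnj \<circ> (\<lambda>t. hf (cis t) * cis t ^ n)) has_integral cnj (complex_of_real (2 * pi * a * 0 ^ n))) {0..2*pi}"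
    by (subst has_integral_cnj) (rule int1)
  moreover have "(cnj \<circ> (\<lambda>t. hf (cis t) * cis t ^ n)) = (\<lambda>t. hf (inverse (cis t)) * inverse (cis t) ^ n)"
    by (rule ext) (simp add: hf_cnj[symmetric] cis_cnj)
  ultimately show ?thesis by simp
qed

end

lemma sin_nz: assumes "t \<in> {0..2*pi} - {0, pi, 2*pi}" shows "sin t \<noteq> 0"
proof -
  have t: "0 < t" "t < 2*pi" "t \<noteq> pi" using assms by auto
  show ?thesis
  proof (cases "t < pi")
    case True thus ?thesis using sin_gt_zero[of t] t by simp
  next
    case False
    hence "0 < t - pi" "t - pi < pi" using t by auto
    hence "0 < sin (t - pi)" by (rule sin_gt_zero)
    thus ?thesis by simp
  qed
qed

context jac begin

lemma orth: "((\<lambda>t. complex_of_real (phi k t * phi l t * w t)) has_integral (if k = l then 1 else 0)) {0..2*pi}"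
proof -
  define n where "n = k + l"
  define E where "E t = complex_of_real (sc k * sc l) *
    ((hf (cis t) * cis t ^ n + hf (inverse (cis t)) * inverse (cis t) ^ n
      + cis t ^ k * inverse (cis t) ^ l + cis t ^ l * inverse (cis t) ^ k) / (4 * of_real pi))" for t
  define V where "V = complex_of_real (sc k * sc l) *
    ((complex_of_real (2 * pi * a * 0 ^ n) + complex_of_real (2 * pi * a * 0 ^ n)
      + complex_of_real (if k = l then 2*pi else 0) + complex_of_real (if l = k then 2*pi else 0)) / (4 * complex_of_real pi))"
  have VR: "V = complex_of_real ((sc k * sc l) * ((2*pi*a*0^n + 2*pi*a*0^n + (if k = l then 2*pi else 0) + (if l = k then 2*pi else 0)) / (4*pi)))"
    unfolding V_def by simp
  have hE: "(E has_integral V) {0..2*pi}"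
    unfolding E_def V_def
    by (intro has_integral_mult_right has_integral_divide has_integral_add int1 int2 int_pow)
  have hV: "V = (if k = l then 1 else 0)"
  proof (cases "n = 0")
    case True
    hence kl: "k = 0" "l = 0" unfolding n_def by auto
    have "(sc k * sc l) * ((2*pi*a*0^n + 2*pi*a*0^n + (if k = l then 2*pi else 0) + (if l = k then 2*pi else 0)) / (4*pi))
      = (1/cb) * (1/cb) * ((4*pi*(a+1)) / (4*pi))" using kl True by (simp add: sc_def algebra_simps)
    also have "\<dots> = (a + 1) / cb^2" by (simp add: power2_eq_square)
    also have "\<dots> = 1" unfolding a_def using cb_nz by simp
    finally show ?thesis unfolding VR using kl by simp
  next
    case False
    thus ?thesis unfolding VR n_def by (auto simp: sc_def)
  qed
  have hpt: "complex_of_real (phi k t * phi l t * w t) = E t" if "t \<in> {0..2*pi} - {0, pi, 2*pi}" for t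
  proof -
    have s: "sin t \<noteq> 0" by (rule sin_nz[OF that])
    have "complex_of_real (phi k t * phi l t * w t) = of_real (phi k t) * of_real (phi l t) * of_real (w t)" by simp
    also have "\<dots> = complex_of_real (sc k * sc l) * (psi k t * psi l t * of_real (w t))"
      unfolding phi_psi[OF s] by (simp add: mult_ac)
    also have "\<dots> = E t" unfolding prod_formula[OF s] E_def n_def ..
    finally show ?thesis .
  qed
  have hE1: "(E has_integral (if k = l then 1 else 0)) {0..2*pi}" using hE unfolding hV .
  show ?thesis by (rule has_integral_spike_finite[of "{0, pi, 2*pi}", OF _ hpt hE1]) simp_all
qed

end

context jac begin

lemma P_cont_aux: "continuous_on S (P k) \<and> continuous_on S (P (Suc k))"
proof (induction k)
  case 0
  have "continuous_on S (\<lambda>x. (x - \<mu>) / C)" using C_nz by (intro continuous_intros) auto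
  thus ?case by (simp add: continuous_on_const)
next
  case (Suc k)
  show ?case
  proof (cases k)
    case 0
    have "continuous_on S (\<lambda>x. (x * P (Suc 0) x - C) / B)"
      using Suc.IH 0 B_nz by (intro continuous_intros) auto
    thus ?thesis using Suc.IH 0 by simp
  next
    case (Suc k')
    have "continuous_on S (\<lambda>x. (x * P (Suc (Suc k')) x - B * P (Suc k') x) / B)"
      using Suc.IH \<open>k = Suc k'\<close> B_nz by (intro continuous_intros) auto
    thus ?thesis using Suc.IH \<open>k = Suc k'\<close> by simp
  qed
qed

lemma P_cont: "continuous_on S (P k)" using P_cont_aux by blast

lemma phi_cont: "continuous_on S (phi k)"
proof -
  have "continuous_on S (\<lambda>t. P k (2 * B * cos t))"
    by (rule continuous_on_compose2[OF P_cont[of UNIV k]]) (auto intro!: continuous_intros)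
  thus ?thesis unfolding phi_def[abs_def] .
qed

lemma w_cont: "continuous_on S w"
proof -
  have cF: "continuous_on S (\<lambda>t. F (cis t))" unfolding F_def by (intro continuous_intros)
  have "continuous_on S (\<lambda>t. cb^2 * (sin t)^2 / (pi * (cmod (F (cis t)))^2))"
    using F_cis_nz by (intro continuous_intros cF) auto
  thus ?thesis unfolding w_def[abs_def] .
qed

definition mom :: "nat \<Rightarrow> nat \<Rightarrow> nat \<Rightarrow> complex" where
  "mom j n k = integral {0..2*pi} (\<lambda>t. complex_of_real ((2*B*cos t)^n * phi j t * phi k t * w t))"

lemma integrable_gen: "continuous_on UNIV g \<Longrightarrow> (\<lambda>t. complex_of_real (g t)) integrable_on {0..2*pi}"
  by (rule integrable_continuous_interval) (auto intro!: continuous_intros intro: continuous_on_subset)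

lemma mom_comb:
  "of_real \<alpha> * mom j n k1 + of_real \<beta> * mom j n k2 =
   integral {0..2*pi} (\<lambda>t. complex_of_real ((2*B*cos t)^n * phi j t * (\<alpha> * phi k1 t + \<beta> * phi k2 t) * w t))"
proof -
  let ?g1 = "\<lambda>t. \<alpha> * ((2*B*cos t)^n * phi j t * phi k1 t * w t)"
  let ?g2 = "\<lambda>t. \<beta> * ((2*B*cos t)^n * phi j t * phi k2 t * w t)"
  have c1: "continuous_on UNIV ?g1" by (intro continuous_intros phi_cont w_cont)
  have c2: "continuous_on UNIV ?g2" by (intro continuous_intros phi_cont w_cont)
  have "integral {0..2*pi} (\<lambda>t. complex_of_real ((2*B*cos t)^n * phi j t * (\<alpha> * phi k1 t + \<beta> * phi k2 t) * w t))
      = integral {0..2*pi} (\<lambda>t. complex_of_real (?g1 t) + complex_of_real (?g2 t))"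
    by (rule integral_cong) (simp add: algebra_simps)
  also have "\<dots> = integral {0..2*pi} (\<lambda>t. complex_of_real (?g1 t)) + integral {0..2*pi} (\<lambda>t. complex_of_real (?g2 t))"
    by (rule integral_add[OF integrable_gen[OF c1] integrable_gen[OF c2]])
  also have "\<dots> = of_real \<alpha> * mom j n k1 + of_real \<beta> * mom j n k2"
    unfolding mom_def of_real_mult integral_mult_right by (simp add: mult_ac)
  finally show ?thesis by simp
qed

lemma mom0: "mom j 0 k = basis_vec j k"
  unfolding mom_def basis_vec_def using integral_unique[OF orth[of j k]] by auto

lemma moments: "(jacobiH B C \<mu> ^^ n) (basis_vec j) k = mom j n k"
proof (induction n arbitrary: k)
  case 0 thus ?case by (simp add: mom0)
next
  case (Suc n)
  have e: "(jacobiH B C \<mu> ^^ n) (basis_vec j) = (\<lambda>k. mom j n k)" using Suc.IH by auto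
  have "(jacobiH B C \<mu> ^^ Suc n) (basis_vec j) k = jacobiH B C \<mu> (\<lambda>k. mom j n k) k"
    by (simp add: e)
  also have "\<dots> = mom j (Suc n) k"
  proof -
    consider "k = 0" | "k = 1" | "k \<ge> 2" by linarith
    thus ?thesis
    proof cases
      case 1
      have "jacobiH B C \<mu> (\<lambda>k. mom j n k) k = of_real \<mu> * mom j n 0 + of_real C * mom j n 1"
        using 1 by (simp add: jacobiH_def)
      also have "\<dots> = mom j (Suc n) k" unfolding mom_comb unfolding mom_def 1
      proof (rule integral_cong)
        fix t
        have r: "\<mu> * phi 0 t + C * phi 1 t = 2*B*cos t * phi 0 t" using row0 unfolding phi_def .
        show "complex_of_real ((2*B*cos t)^n * phi j t * (\<mu> * phi 0 t + C * phi 1 t) * w t)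
          = complex_of_real ((2*B*cos t)^Suc n * phi j t * phi 0 t * w t)"
          unfolding r by (simp add: mult_ac)
      qed
      finally show ?thesis .
    next
      case 2
      have "jacobiH B C \<mu> (\<lambda>k. mom j n k) k = of_real C * mom j n 0 + of_real B * mom j n 2"
        using 2 by (simp add: jacobiH_def)
      also have "\<dots> = mom j (Suc n) k" unfolding mom_comb unfolding mom_def 2
      proof (rule integral_cong)
        fix t
        have r: "C * phi 0 t + B * phi 2 t = 2*B*cos t * phi 1 t" using row1 unfolding phi_def .
        show "complex_of_real ((2*B*cos t)^n * phi j t * (C * phi 0 t + B * phi 2 t) * w t)
          = complex_of_real ((2*B*cos t)^Suc n * phi j t * phi 1 t * w t)"
          unfolding r by (simp add: mult_ac)
      qed
      finally show ?thesis .
    next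
      case 3
      have "jacobiH B C \<mu> (\<lambda>k. mom j n k) k = of_real B * mom j n (k - 1) + of_real B * mom j n (k + 1)"
        using 3 by (simp add: jacobiH_def)
      also have "\<dots> = mom j (Suc n) k" unfolding mom_comb unfolding mom_def
      proof (rule integral_cong)
        fix t
        have r: "B * phi (k-1) t + B * phi (k+1) t = 2*B*cos t * phi k t" using rowk[OF 3] unfolding phi_def .
        show "complex_of_real ((2*B*cos t)^n * phi j t * (B * phi (k-1) t + B * phi (k+1) t) * w t)
          = complex_of_real ((2*B*cos t)^Suc n * phi j t * phi k t * w t)"
          unfolding r by (simp add: mult_ac)
      qed
      finally show ?thesis .
    qed
  qed
  finally show ?case .
qed

end

lemma normE: "norm (exp (- \<i> * of_real L * of_real (cos t))) = 1"
  by simp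

lemma E_deriv:
  "((\<lambda>t. exp (- \<i> * of_real L * of_real (cos t))) has_vector_derivative
     (exp (- \<i> * of_real L * of_real (cos t)) * (\<i> * of_real L * of_real (sin t)))) (at t within S)"
proof -
  have "((\<lambda>z. exp (- \<i> * of_real L * cos z)) has_field_derivative
     (exp (- \<i> * of_real L * cos (of_real t)) * (\<i> * of_real L * sin (of_real t)))) (at (of_real t))"
    by (auto intro!: derivative_eq_intros)
  from has_vector_derivative_real_field[OF this, of S] show ?thesis
    by (simp add: cos_of_real sin_of_real)
qed

lemma RL_poly_part:
  fixes q q' :: "real \<Rightarrow> real"
  assumes ab: "a \<le> b" and L: "L > 0"
    and dq: "\<And>x. (q has_vector_derivative q' x) (at x)"
    and cq: "continuous_on {a..b} q" and cq': "continuous_on {a..b} q'"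
    and M: "\<And>x. x \<in> {a..b} \<Longrightarrow> \<bar>q x\<bar> \<le> M" and M': "\<And>x. x \<in> {a..b} \<Longrightarrow> \<bar>q' x\<bar> \<le> M'"
  shows "norm (integral {a..b} (\<lambda>t. exp (- \<i> * of_real L * of_real (cos t)) * of_real (sin t * q t)))
          \<le> (2 * M + M' * (b - a)) / L"
proof -
  define E where "E t = exp (- \<i> * of_real L * of_real (cos t))" for t
  define c where "c = \<i> * complex_of_real L"
  have c0: "c \<noteq> 0" using L by (simp add: c_def)
  define Phi where "Phi t = E t * of_real (q t) / c" for t
  define D where "D t = E t * of_real (sin t * q t) + E t * of_real (q' t) / c" for t
  have dPhi: "(Phi has_vector_derivative D t) (at t within {a..b})" if "t \<in> {a..b}" for t
  proof -
    have dq1: "((\<lambda>t. complex_of_real (q t)) has_vector_derivative of_real (q' t)) (at t within {a..b})"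
      using dq[of t] unfolding has_real_derivative_iff_has_vector_derivative[symmetric]
      by (intro has_vector_derivative_of_real) (auto intro: has_field_derivative_at_within)
    have "((\<lambda>t. E t * of_real (q t) / c) has_vector_derivative
       ((E t * of_real (q' t) + E t * (\<i> * of_real L * of_real (sin t)) * of_real (q t)) / c)) (at t within {a..b})"
      unfolding E_def by (intro has_vector_derivative_divide has_vector_derivative_mult E_deriv dq1)
    moreover have "(E t * of_real (q' t) + E t * (\<i> * of_real L * of_real (sin t)) * of_real (q t)) / c = D t"
      unfolding D_def c_def using L by (simp add: field_simps)
    ultimately show ?thesis unfolding Phi_def[abs_def] by simp
  qed
  have cE: "continuous_on {a..b} E" unfolding E_def[abs_def] by (intro continuous_intros)
  have ftc: "(D has_integral (Phi b - Phi a)) {a..b}"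
    by (rule fundamental_theorem_of_calculus[OF ab dPhi])
  have c2: "continuous_on {a..b} (\<lambda>t. E t * of_real (q' t) / c)"
    by (intro continuous_intros cE cq') (use c0 in auto)
  have i2: "(\<lambda>t. E t * of_real (q' t) / c) integrable_on {a..b}"
    by (rule integrable_continuous_interval[OF c2])
  have i1: "(\<lambda>t. E t * of_real (sin t * q t)) integrable_on {a..b}"
    by (rule integrable_continuous_interval) (intro continuous_intros cE cq)
  have "integral {a..b} (\<lambda>t. E t * of_real (sin t * q t)) = (Phi b - Phi a) - integral {a..b} (\<lambda>t. E t * of_real (q' t) / c)"
  proof -
    have "integral {a..b} D = integral {a..b} (\<lambda>t. E t * of_real (sin t * q t)) + integral {a..b} (\<lambda>t. E t * of_real (q' t) / c)"
      unfolding D_def by (rule integral_add[OF i1 i2])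
    thus ?thesis using integral_unique[OF ftc] by simp
  qed
  moreover have "norm (Phi b - Phi a) \<le> 2 * M / L"
  proof -
    have "norm (Phi t) \<le> M / L" if "t \<in> {a..b}" for t
      unfolding Phi_def E_def c_def using M[OF that] L by (simp add: norm_divide norm_mult divide_right_mono)
    hence "norm (Phi b) \<le> M / L" "norm (Phi a) \<le> M / L" using ab by auto
    hence "norm (Phi b) + norm (Phi a) \<le> 2 * M / L" by simp
    thus ?thesis by (meson norm_triangle_ineq4 order_trans)
  qed
  moreover have "norm (integral {a..b} (\<lambda>t. E t * of_real (q' t) / c)) \<le> (M' / L) * (b - a)"
  proof (rule integral_bound[OF ab c2])
    fix t assume "t \<in> {a..b}"
    thus "norm (E t * of_real (q' t) / c) \<le> M' / L"
      unfolding E_def c_def using M' L by (simp add: norm_divide norm_mult divide_right_mono)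
  qed
  ultimately have "norm (integral {a..b} (\<lambda>t. E t * of_real (sin t * q t))) \<le> 2 * M / L + (M' / L) * (b - a)"
    using norm_triangle_ineq4[of "Phi b - Phi a" "integral {a..b} (\<lambda>t. E t * of_real (q' t) / c)"] by simp
  also have "\<dots> = (2 * M + M' * (b - a)) / L" using L by (simp add: field_simps)
  finally show ?thesis unfolding E_def .
qed

lemma RL:
  fixes r :: "real \<Rightarrow> real"
  assumes ab: "a \<le> b" and cr: "continuous_on {a..b} r"
  shows "((\<lambda>L. integral {a..b} (\<lambda>t. exp (- \<i> * of_real L * of_real (cos t)) * of_real (sin t * r t))) \<longlongrightarrow> 0) at_top"
proof (rule tendstoI)
  fix \<epsilon> :: real assume e: "\<epsilon> > 0"
  define e1 where "e1 = \<epsilon> / (2 * (b - a + 1))"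
  have e1: "e1 > 0" unfolding e1_def using e ab by simp
  obtain q where pq: "polynomial_function q" and aq: "\<forall>x\<in>{a..b}. norm (r x - q x) < e1"
    using Stone_Weierstrass_polynomial_function[OF compact_Icc cr e1] by blast
  obtain q' where pq': "polynomial_function q'" and dq: "\<And>x. (q has_vector_derivative q' x) (at x)"
    using has_vector_derivative_polynomial_function[OF pq] by blast
  have cq: "continuous_on {a..b} q" by (rule continuous_on_polymonial_function[OF pq])
  have cq': "continuous_on {a..b} q'" by (rule continuous_on_polymonial_function[OF pq'])
  have "bounded (q ` {a..b})" by (rule compact_imp_bounded[OF compact_continuous_image[OF cq compact_Icc]])
  then obtain M where M0: "\<forall>x\<in>{a..b}. \<bar>q x\<bar> \<le> M" by (auto simp: bounded_iff)
  hence M: "\<And>x. x \<in> {a..b} \<Longrightarrow> \<bar>q x\<bar> \<le> M" by blast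
  have "bounded (q' ` {a..b})" by (rule compact_imp_bounded[OF compact_continuous_image[OF cq' compact_Icc]])
  then obtain M' where M'0: "\<forall>x\<in>{a..b}. \<bar>q' x\<bar> \<le> M'" by (auto simp: bounded_iff)
  hence M': "\<And>x. x \<in> {a..b} \<Longrightarrow> \<bar>q' x\<bar> \<le> M'" by blast
  define K where "K = 2 * M + M' * (b - a)"
  define N where "N = max 1 (2 * \<bar>K\<bar> / \<epsilon> + 1)"
  define E where "E L t = exp (- \<i> * of_real L * of_real (cos t))" for L t
  have cE: "continuous_on {a..b} (E L)" for L unfolding E_def by (intro continuous_intros)
  have "\<forall>L\<ge>N. dist (integral {a..b} (\<lambda>t. E L t * of_real (sin t * r t))) 0 < \<epsilon>"
  proof (intro allI impI)
    fix L assume LN: "L \<ge> N"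
    have L0: "L > 0" using LN unfolding N_def by linarith
    have i1: "(\<lambda>t. E L t * of_real (sin t * q t)) integrable_on {a..b}"
      by (rule integrable_continuous_interval) (intro continuous_intros cE cq)
    have c2: "continuous_on {a..b} (\<lambda>t. E L t * of_real (sin t * (r t - q t)))"
      by (intro continuous_intros cE cq cr)
    have "integral {a..b} (\<lambda>t. E L t * of_real (sin t * r t)) =
        integral {a..b} (\<lambda>t. E L t * of_real (sin t * q t) + E L t * of_real (sin t * (r t - q t)))"
      by (rule integral_cong) (simp add: algebra_simps)
    also have "\<dots> = integral {a..b} (\<lambda>t. E L t * of_real (sin t * q t)) + integral {a..b} (\<lambda>t. E L t * of_real (sin t * (r t - q t)))"
      by (rule integral_add[OF i1 integrable_continuous_interval[OF c2]])
    finally have split: "integral {a..b} (\<lambda>t. E L t * of_real (sin t * r t)) = \<dots>" .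
    have n1: "norm (integral {a..b} (\<lambda>t. E L t * of_real (sin t * q t))) \<le> K / L"
      unfolding E_def K_def by (rule RL_poly_part[OF ab L0 dq cq cq' M M'])
    have n2: "norm (integral {a..b} (\<lambda>t. E L t * of_real (sin t * (r t - q t)))) \<le> e1 * (b - a)"
    proof (rule integral_bound[OF ab c2])
      fix t assume t: "t \<in> {a..b}"
      have "\<bar>sin t\<bar> * \<bar>r t - q t\<bar> \<le> 1 * e1"
        using aq t by (intro mult_mono) (auto simp: abs_sin_le_one less_imp_le)
      thus "norm (E L t * of_real (sin t * (r t - q t))) \<le> e1"
        unfolding E_def by (simp add: norm_mult abs_mult of_real_diff[symmetric] del: of_real_diff)
    qed
    have "K / L \<le> \<bar>K\<bar> / L" using L0 by (simp add: divide_right_mono)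
    also have "\<bar>K\<bar> / L < \<epsilon> / 2"
    proof -
      have "2 * \<bar>K\<bar> / \<epsilon> < L" using LN unfolding N_def by linarith
      hence "2 * \<bar>K\<bar> < L * \<epsilon>" using e by (simp add: divide_less_eq)
      thus ?thesis using L0 by (simp add: divide_less_eq field_simps)
    qed
    finally have k1: "K / L < \<epsilon> / 2" .
    have k2: "e1 * (b - a) < \<epsilon> / 2"
    proof -
      have "e1 * (b - a) = \<epsilon> / 2 * ((b - a) / (b - a + 1))" unfolding e1_def using ab by (simp add: field_simps)
      also have "\<dots> < \<epsilon> / 2 * 1" using e ab by (intro mult_strict_left_mono) auto
      finally show ?thesis by simp
    qed
    have "norm (integral {a..b} (\<lambda>t. E L t * of_real (sin t * r t))) < \<epsilon>"
      unfolding split using norm_triangle_ineq[of "integral {a..b} (\<lambda>t. E L t * of_real (sin t * q t))"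
        "integral {a..b} (\<lambda>t. E L t * of_real (sin t * (r t - q t)))"] n1 n2 k1 k2 by linarith
    thus "dist (integral {a..b} (\<lambda>t. E L t * of_real (sin t * r t))) 0 < \<epsilon>" by simp
  qed
  thus "\<forall>\<^sub>F L in at_top. dist (integral {a..b} (\<lambda>t. exp (- \<i> * of_real L * of_real (cos t)) * of_real (sin t * r t))) 0 < \<epsilon>"
    unfolding eventually_at_top_linorder E_def by blast
qed

lemma exp_partial_bound:
  fixes y :: real assumes "y \<ge> 0"
  shows "(\<Sum>n<N. y^n / fact n) \<le> exp y"
proof -
  have s: "(\<lambda>n. y^n /\<^sub>R fact n) sums exp y" by (rule exp_converges)
  have "(\<Sum>n<N. y^n /\<^sub>R fact n) \<le> suminf (\<lambda>n. y^n /\<^sub>R fact n)"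
    by (rule sum_le_suminf[OF sums_summable[OF s]]) (use assms in auto)
  thus ?thesis using sums_unique[OF s] by (simp add: divide_inverse mult.commute)
qed

lemma exp_partial_tendsto:
  fixes z :: complex
  shows "(\<lambda>N. \<Sum>n<N. z^n / of_nat (fact n)) \<longlonglongrightarrow> exp z"
proof -
  have s: "(\<lambda>n. z^n /\<^sub>R fact n) sums exp z" by (rule exp_converges)
  have e: "z^n /\<^sub>R fact n = z^n / fact n" for n
    by (simp add: scaleR_conv_of_real divide_inverse mult.commute)
  from s show ?thesis unfolding sums_def e by simp
qed

context jac begin

definition gj :: "nat \<Rightarrow> real \<Rightarrow> real" where "gj j s = phi j s * phi j s * w s"

lemma gj_cont: "continuous_on S (gj j)"
  unfolding gj_def[abs_def] by (intro continuous_intros phi_cont w_cont)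

lemma evolved_sums:
  "(\<lambda>n. ((- \<i> * of_real t) ^ n / of_nat (fact n)) * mom j n j) sums
     integral {0..2*pi} (\<lambda>s. exp (- \<i> * of_real t * of_real (2*B*cos s)) * of_real (gj j s))"
proof -
  define z where "z s = - \<i> * of_real t * of_real (2*B*cos s)" for s
  define fN where "fN N s = (\<Sum>n<N. z s ^ n / of_nat (fact n)) * of_real (gj j s)" for N s
  define c where "c n = (- \<i> * of_real t) ^ n / of_nat (fact n)" for n :: nat
  have cont_fN: "continuous_on UNIV (fN N)" for N
    unfolding fN_def z_def by (intro continuous_intros gj_cont) auto
  have partial: "(\<Sum>n<N. c n * mom j n j) = integral {0..2*pi} (fN N)" for N
  proof -
    have int_n: "(\<lambda>s. c n * complex_of_real ((2*B*cos s)^n * phi j s * phi j s * w s)) integrable_on {0..2*pi}" for n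
      by (rule integrable_continuous_interval) (intro continuous_intros phi_cont w_cont)
    have "(\<Sum>n<N. c n * mom j n j) = (\<Sum>n<N. integral {0..2*pi} (\<lambda>s. c n * complex_of_real ((2*B*cos s)^n * phi j s * phi j s * w s)))"
      unfolding mom_def by simp
    also have "\<dots> = integral {0..2*pi} (\<lambda>s. \<Sum>n<N. c n * complex_of_real ((2*B*cos s)^n * phi j s * phi j s * w s))"
      by (rule integral_sum[symmetric], simp, rule int_n)
    also have "\<dots> = integral {0..2*pi} (fN N)"
    proof (rule integral_cong)
      fix s
      have "c n * complex_of_real ((2*B*cos s)^n * phi j s * phi j s * w s) = z s ^ n / of_nat (fact n) * of_real (gj j s)" for n
      proof -
        have zp: "z s ^ n = (- \<i> * of_real t)^n * (complex_of_real (2*B*cos s))^n"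
          unfolding z_def by (rule power_mult_distrib)
        show ?thesis unfolding zp c_def gj_def of_real_mult of_real_power by (simp only: mult_ac divide_inverse)
      qed
      thus "(\<Sum>n<N. c n * complex_of_real ((2*B*cos s)^n * phi j s * phi j s * w s)) = fN N s"
        unfolding fN_def by (simp add: sum_distrib_right)
    qed
    finally show ?thesis .
  qed
  define h where "h s = exp (2 * B * \<bar>t\<bar>) * \<bar>gj j s\<bar>" for s
  have hint: "h integrable_on {0..2*pi}"
    by (rule integrable_continuous_interval) (unfold h_def, intro continuous_intros gj_cont)
  have bound: "norm (fN N s) \<le> h s" for N s
  proof -
    have nz: "norm (z s) \<le> 2 * B * \<bar>t\<bar>"
    proof -
      have "norm (z s) = \<bar>t\<bar> * (2 * B * \<bar>cos s\<bar>)" unfolding z_def using Bpos by (simp add: norm_mult abs_mult)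
      also have "\<dots> \<le> \<bar>t\<bar> * (2 * B * 1)" using Bpos by (intro mult_left_mono) (auto simp: abs_cos_le_one)
      finally show ?thesis by (simp add: mult_ac)
    qed
    have "norm (\<Sum>n<N. z s ^ n / of_nat (fact n)) \<le> (\<Sum>n<N. norm (z s) ^ n / fact n)"
      by (rule order_trans[OF norm_sum]) (simp add: norm_divide norm_power)
    also have "\<dots> \<le> exp (norm (z s))" by (rule exp_partial_bound) simp
    also have "\<dots> \<le> exp (2 * B * \<bar>t\<bar>)" using nz by simp
    finally have "norm (\<Sum>n<N. z s ^ n / of_nat (fact n)) \<le> exp (2 * B * \<bar>t\<bar>)" .
    thus ?thesis unfolding fN_def h_def norm_mult norm_of_real by (rule mult_right_mono) simp
  qed
  have conv: "(\<lambda>N. fN N s) \<longlonglongrightarrow> exp (z s) * of_real (gj j s)" for s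
    unfolding fN_def by (intro tendsto_mult_right exp_partial_tendsto)
  have "(\<lambda>N. integral {0..2*pi} (fN N)) \<longlonglongrightarrow> integral {0..2*pi} (\<lambda>s. exp (z s) * of_real (gj j s))"
    by (rule dominated_convergence(2)[OF _ hint bound conv])
       (rule integrable_continuous_interval, rule continuous_on_subset[OF cont_fN], simp)
  thus ?thesis unfolding sums_def c_def[symmetric] partial z_def .
qed

lemma evolved_eq:
  "evolved B C \<mu> j t j = integral {0..2*pi} (\<lambda>s. exp (- \<i> * of_real t * of_real (2*B*cos s)) * of_real (gj j s))"
  unfolding evolved_def moments by (rule sums_unique[OF evolved_sums, symmetric])

lemma amp_tendsto: "((\<lambda>t. evolved B C \<mu> j t j) \<longlongrightarrow> 0) at_top"
proof -
  define r where "r s = phi j s * phi j s * (cb^2 * sin s / (pi * (cmod (F (cis s)))^2))" for s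
  have cr: "continuous_on {0..2*pi} r"
  proof -
    have cF: "continuous_on {0..2*pi} (\<lambda>s. F (cis s))" unfolding F_def by (intro continuous_intros)
    show ?thesis unfolding r_def using F_cis_nz by (intro continuous_intros phi_cont cF) auto
  qed
  have RL': "((\<lambda>L. integral {0..2*pi} (\<lambda>s. exp (- \<i> * of_real L * of_real (cos s)) * of_real (sin s * r s))) \<longlongrightarrow> 0) at_top"
    by (rule RL[OF _ cr]) simp
  have lim: "filterlim (\<lambda>t. 2 * B * t) at_top at_top"
    by (rule filterlim_tendsto_pos_mult_at_top[OF tendsto_const _ filterlim_ident]) (use Bpos in simp)
  have "((\<lambda>t. integral {0..2*pi} (\<lambda>s. exp (- \<i> * of_real (2*B*t) * of_real (cos s)) * of_real (sin s * r s))) \<longlongrightarrow> 0) at_top"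
    by (rule filterlim_compose[OF RL' lim])
  moreover have "evolved B C \<mu> j t j = integral {0..2*pi} (\<lambda>s. exp (- \<i> * of_real (2*B*t) * of_real (cos s)) * of_real (sin s * r s))" for t
    unfolding evolved_eq
  proof (rule integral_cong)
    fix s
    show "exp (- \<i> * of_real t * of_real (2*B*cos s)) * of_real (gj j s) =
        exp (- \<i> * of_real (2*B*t) * of_real (cos s)) * of_real (sin s * r s)"
      unfolding gj_def r_def w_def by (simp add: power2_eq_square mult_ac)
  qed
  ultimately show ?thesis by simp
qed

end

theorem theorem1:
  fixes B C \<mu> :: real and j :: nat
  assumes "B > 0"
    and "C \<noteq> B \<Longrightarrow> 2 * \<bar>1 - (C / B)\<^sup>2\<bar> <
           cmod (complex_of_real \<bar>\<mu> / B\<bar>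
                 - csqrt (complex_of_real ((\<mu> / B)\<^sup>2 + 4 * (C / B)\<^sup>2 - 4)))"
    and "C = B \<Longrightarrow> \<bar>\<mu> / B\<bar> < 1"
  shows "((\<lambda>t. l2_inner (evolved B C \<mu> j t) (proj_nj j (evolved B C \<mu> j t)))
            \<longlongrightarrow> 0) at_top
     \<and> ((\<lambda>t. (cmod (l2_inner (basis_vec j) (evolved B C \<mu> j t)))\<^sup>2) \<longlongrightarrow> 0) at_top"
proof -
  have "jac B C \<mu>"
  proof
    show "B > 0" by fact
    fix u :: complex assume u: "u^2 - of_real (\<mu>/B) * u - of_real ((C/B)^2 - 1) = 0"
    show "cmod u < 1"
    proof (cases "C = B")
      case True
      hence z: "(C/B)^2 - 1 = 0" using assms(1) by simp
      have h: "u^2 - of_real (\<mu>/B) * u = 0" using u unfolding z by simp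
      hence "u * (u - of_real (\<mu>/B)) = 0" by (simp add: power2_eq_square algebra_simps)
      hence "u = 0 \<or> u = of_real (\<mu>/B)" by auto
      moreover have "cmod (complex_of_real (\<mu>/B)) < 1" using assms(3)[OF True] by (simp only: norm_of_real)
      ultimately show ?thesis by auto
    next
      case False
      show ?thesis
      proof (rule root_mod_lt1[where q = "csqrt (of_real ((\<mu>/B)^2 + 4*((C/B)^2 - 1)))" and m = "\<mu>/B" and a = "(C/B)^2 - 1"])
        show "(csqrt (of_real ((\<mu>/B)^2 + 4*((C/B)^2 - 1))))^2 = of_real ((\<mu>/B)^2 + 4*((C/B)^2 - 1))"
          by simp
        show "0 \<le> Re (csqrt (of_real ((\<mu>/B)^2 + 4*((C/B)^2 - 1))))" by (rule Re_csqrt)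
        have e1: "(\<mu>/B)^2 + 4*((C/B)^2 - 1) = (\<mu> / B)\<^sup>2 + 4 * (C / B)\<^sup>2 - 4" by simp
        have e2: "\<bar>(C/B)^2 - 1\<bar> = \<bar>1 - (C / B)\<^sup>2\<bar>" by (rule abs_minus_commute)
        show "2 * \<bar>(C/B)^2 - 1\<bar> < cmod (of_real \<bar>\<mu>/B\<bar> - csqrt (of_real ((\<mu>/B)^2 + 4*((C/B)^2 - 1))))"
          unfolding e1 e2 using assms(2)[OF False] by simp
        show "u^2 - of_real (\<mu>/B) * u - of_real ((C/B)^2 - 1) = 0" by (rule u)
      qed
    qed
  qed
  then interpret J: jac B C \<mu> .
  have li: "l2_inner (basis_vec j) v = v j" for v
  proof -
    have "(\<lambda>k. cnj (basis_vec j k) * v k) = (\<lambda>k. if k = j then v k else 0)"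
      by (rule ext) (simp add: basis_vec_def)
    thus ?thesis unfolding l2_inner_def using sums_unique[OF sums_single[of j v]] by simp
  qed
  have lp: "l2_inner v (proj_nj j v) = complex_of_real ((cmod (v j))^2)" for v
  proof -
    have "(\<lambda>k. cnj (v k) * proj_nj j v k) = (\<lambda>k. if k = j then cnj (v k) * v k else 0)"
      unfolding proj_nj_def li by (rule ext) (simp add: basis_vec_def)
    hence "l2_inner v (proj_nj j v) = cnj (v j) * v j"
      unfolding l2_inner_def using sums_unique[OF sums_single[of j "\<lambda>k. cnj (v k) * v k"]] by simp
    thus ?thesis unfolding complex_norm_square by (simp add: mult.commute)
  qed
  have amp: "((\<lambda>t. evolved B C \<mu> j t j) \<longlongrightarrow> 0) at_top" by (rule J.amp_tendsto)
  have n2: "((\<lambda>t. (cmod (evolved B C \<mu> j t j))^2) \<longlongrightarrow> 0) at_top"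
    using tendsto_power[OF tendsto_norm_zero[OF amp], of 2] by simp
  have n3: "((\<lambda>t. complex_of_real ((cmod (evolved B C \<mu> j t j))^2)) \<longlongrightarrow> 0) at_top"
    using tendsto_of_real[OF n2] by simp
  show ?thesis unfolding lp li using n2 n3 by simp
qed

end
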